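(* Let $r\in C([0,\infty);(0,\infty))$ satisfy $r\in\mathrm{RV}_\infty(\mu)$ for some $\mu\in(-1,-1/2)$. Then $c(t):=\int_0^\infty r(s)r(s+t)\,ds$ is finite for every $t\ge0$ and $$\lim_{t\to\infty}\frac{c(t)}{t\,r^2(t)}=\frac{\Gamma(-1-2\mu)\Gamma(1+\mu)}{\Gamma(-\mu)}>0.$$
   Context: $f\in\mathrm{RV}_\infty(\mu)$ means $f(t)=t^\mu L(t)$ with $L$ positive and slowly varying at infinity, i.e. $L(xt)/L(t)\to1$ as $t\to\infty$ for every $x>0$. *)

theory Defs
  imports "HOL-Analysis.Analysis"
begin

definition slowly_varying_at_top :: "(real \<Rightarrow> real) \<Rightarrow> bool" where
  "slowly_varying_at_top L \<longleftrightarrow>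
     (\<forall>x>0. ((\<lambda>t. L (x * t) / L t) \<longlongrightarrow> 1) at_top)"

definition regularly_varying_at_top :: "real \<Rightarrow> (real \<Rightarrow> real) \<Rightarrow> bool" where
  "regularly_varying_at_top \<mu> f \<longleftrightarrow>
     (\<exists>L. (\<forall>t>0. L t > 0) \<and> slowly_varying_at_top L \<and> (\<forall>t>0. f t = t powr \<mu> * L t))"

end

theory Submission
  imports Defs
begin

lemma beta_halfline:
  fixes a b :: real
  assumes a: "a > -1" and ab: "a + b < -1"
  shows "(\<lambda>u. u powr a * (1+u) powr b) absolutely_integrable_on {0<..}
     \<and> integral {0<..} (\<lambda>u. u powr a * (1+u) powr b) = Beta (a+1) (-a-b-1)"
proof -
  define S :: "real set" where "S = {0<..<1}"
  define g :: "real \<Rightarrow> real" where "g v = v / (1 - v)" for v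
  define g' :: "real \<Rightarrow> real" where "g' v = 1 / (1 - v)^2" for v
  define f :: "real \<Rightarrow> real" where "f u = u powr a * (1+u) powr b" for u
  have der: "(g has_field_derivative g' x) (at x within S)" if "x \<in> S" for x
  proof -
    have "x \<noteq> 1" using that by (auto simp: S_def)
    then show ?thesis unfolding g_def g'_def
      by (auto intro!: derivative_eq_intros simp: field_simps power2_eq_square)
  qed
  have inj: "inj_on g S"
    unfolding inj_on_def S_def g_def by (auto simp: field_simps)
  have img: "g ` S = {0<..}"
  proof
    show "g ` S \<subseteq> {0<..}" by (auto simp: S_def g_def)
    show "{0<..} \<subseteq> g ` S"
    proof
      fix u :: real assume "u \<in> {0<..}"
      then have u: "u > 0" by simp
      have "g (u/(1+u)) = u" using u by (simp add: g_def field_simps)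
      moreover have "u/(1+u) \<in> S" using u by (simp add: S_def field_simps)
      ultimately show "u \<in> g ` S" by (metis image_eqI)
    qed
  qed
  have eq: "\<bar>g' v\<bar> * f (g v) = v powr (a+1-1) * (1-v) powr ((-a-b-1) - 1)" if "v \<in> S" for v
  proof -
    have v: "0 < v" "v < 1" using that by (auto simp: S_def)
    have "1 + v/(1-v) = 1/(1-v)" using v by (simp add: field_simps)
    then have "\<bar>g' v\<bar> * f (g v) = (1-v) powr (-2) * (v powr a / (1-v) powr a) * (1-v) powr (-b)"
      using v by (simp add: g'_def f_def g_def powr_divide powr_minus_divide powr_realpow abs_of_pos
          divide_simps)
    also have "\<dots> = v powr a * ((1-v) powr (-2) * (1-v) powr (-a) * (1-v) powr (-b))"
      using v by (simp add: powr_minus divide_simps)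
    also have "\<dots> = v powr a * (1-v) powr (-2 - a - b)"
      using v by (simp add: powr_add[symmetric])
    finally have "\<bar>g' v\<bar> * f (g v) = v powr a * (1-v) powr (-2 - a - b)" .
    moreover have "(-a-b-1) - 1 = -2 - a - b" "a + 1 - 1 = a" by simp_all
    ultimately show ?thesis by (simp only:)
  qed
  have beta: "((\<lambda>v. v powr (a+1-1) * (1-v) powr ((-a-b-1) - 1)) has_integral Beta (a+1) (-a-b-1)) S"
    unfolding S_def using has_integral_Beta_real[of "a+1" "-a-b-1"] a ab
    by (simp add: has_integral_Icc_iff_Ioo)
  have absb: "(\<lambda>v. v powr (a+1-1) * (1-v) powr ((-a-b-1) - 1)) absolutely_integrable_on S"
    by (rule nonnegative_absolutely_integrable_1) (use beta in auto)
  have lhs: "(\<lambda>x. \<bar>g' x\<bar> * f (g x)) absolutely_integrable_on S \<and>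
           integral S (\<lambda>x. \<bar>g' x\<bar> * f (g x)) = Beta (a+1) (-a-b-1)"
  proof
    show "(\<lambda>x. \<bar>g' x\<bar> * f (g x)) absolutely_integrable_on S"
      by (rule absolutely_integrable_spike[OF absb, of "{}"]) (use eq in auto)
    show "integral S (\<lambda>x. \<bar>g' x\<bar> * f (g x)) = Beta (a+1) (-a-b-1)"
      using integral_cong[of S "\<lambda>x. \<bar>g' x\<bar> * f (g x)", OF eq] beta by (simp add: integral_unique)
  qed
  have "f absolutely_integrable_on (g ` S) \<and> integral (g ` S) f = Beta (a+1) (-a-b-1)"
    using has_absolute_integral_change_of_variables_1'[of S g g' f, OF _ der inj] lhs
    by (simp add: S_def)
  then show ?thesis using img by (simp add: f_def[abs_def])
qed

lemma uct_add:
  fixes h :: "real \<Rightarrow> real"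
  assumes cont: "continuous_on UNIV h"
    and lim: "\<And>y. ((\<lambda>x. h (x+y) - h x) \<longlongrightarrow> 0) at_top" and e: "\<epsilon> > 0"
  shows "\<exists>X. \<forall>x\<ge>X. \<forall>y\<in>{0..1}. \<bar>h (x+y) - h x\<bar> \<le> 3*\<epsilon>"
proof -
  have ev: "eventually (\<lambda>x. \<bar>h (x+y) - h x\<bar> < \<epsilon>) at_top" for y
    using lim[of y] e unfolding tendsto_iff by (auto simp: dist_real_def)
  define E where "E N = {y. \<forall>x\<ge>real N. \<bar>h (x+y) - h x\<bar> \<le> \<epsilon>}" for N :: nat
  have hc: "continuous_on UNIV (\<lambda>y. \<bar>h (x+y) - h x\<bar>)" for x
    by (intro continuous_intros continuous_on_compose2[OF cont]) auto
  have clo: "closed (E N)" for N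
  proof -
    have "E N = (\<Inter>x\<in>{real N..}. {y. \<bar>h (x+y) - h x\<bar> \<le> \<epsilon>})"
      by (auto simp: E_def)
    moreover have "closed {y. \<bar>h (x+y) - h x\<bar> \<le> \<epsilon>}" for x
      by (rule closed_Collect_le[OF hc]) auto
    ultimately show ?thesis by auto
  qed
  have cover: "\<exists>N. y \<in> E N" for y
  proof -
    obtain N0 where N0: "\<forall>x\<ge>N0. \<bar>h (x+y) - h x\<bar> < \<epsilon>"
      using ev[of y] unfolding eventually_at_top_linorder by blast
    obtain N :: nat where "N0 \<le> real N" using real_arch_simple by blast
    then have "y \<in> E N" using N0 by (auto simp: E_def intro: less_imp_le)
    then show ?thesis by blast
  qed
  have "\<exists>N. \<not> UNIV \<subseteq> closure (- E N)"
  proof (rule ccontr)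
    assume "\<not> ?thesis"
    then have all: "UNIV \<subseteq> closure (- E N)" for N by blast
    have "(UNIV::real set) \<subseteq> closure (\<Inter>(range (\<lambda>N. - E N)))"
    proof (rule Baire)
      show "countable (range (\<lambda>N. - E N))" by simp
      fix T assume "T \<in> range (\<lambda>N. - E N)"
      then show "openin (top_of_set UNIV) T \<and> UNIV \<subseteq> closure T"
        using clo all by auto
    qed simp
    moreover have "\<Inter>(range (\<lambda>N. - E N)) = {}" using cover by auto
    ultimately show False by simp
  qed
  then obtain N where "\<not> UNIV \<subseteq> closure (- E N)" by blast
  then obtain y0 where "y0 \<in> interior (E N)" by (auto simp: interior_closure)
  then obtain e0 where e0: "e0 > 0" "ball y0 e0 \<subseteq> E N" by (auto simp: mem_interior)
  define d where "d = e0/2"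
  have d: "d > 0" using e0 by (simp add: d_def)
  have inE: "z \<in> E N" if "y0 \<le> z" "z \<le> y0 + d" for z
    using that e0 by (intro subsetD[OF e0(2)]) (auto simp: d_def dist_real_def)
  have step: "\<bar>h (x+z) - h x\<bar> \<le> 2*\<epsilon>" if "x \<ge> real N + \<bar>y0\<bar>" "0 \<le> z" "z \<le> d" for x z
  proof -
    have x': "x - y0 \<ge> real N" using that by auto
    have 1: "\<bar>h ((x - y0) + (y0+z)) - h (x - y0)\<bar> \<le> \<epsilon>"
      using inE[of "y0+z"] that x' unfolding E_def by auto
    have 2: "\<bar>h ((x - y0) + y0) - h (x - y0)\<bar> \<le> \<epsilon>"
      using inE[of "y0"] that x' d unfolding E_def by auto
    show ?thesis using 1 2 by simp
  qed
  define K where "K = nat \<lceil>1/d\<rceil>"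
  have "eventually (\<lambda>x. \<forall>k\<in>{..K}. \<bar>h (x + real k * d) - h x\<bar> < \<epsilon>) at_top"
    by (rule eventually_ball_finite) (auto intro: ev)
  then obtain X1 where X1: "\<forall>x\<ge>X1. \<forall>k\<in>{..K}. \<bar>h (x + real k * d) - h x\<bar> < \<epsilon>"
    unfolding eventually_at_top_linorder by blast
  show ?thesis
  proof (intro exI[of _ "max X1 (real N + \<bar>y0\<bar>)"] allI impI ballI)
    fix x y assume x: "max X1 (real N + \<bar>y0\<bar>) \<le> x" and y: "y \<in> {0..1::real}"
    define k where "k = nat \<lfloor>y/d\<rfloor>"
    have y0: "y \<ge> 0" "y \<le> 1" using y by auto
    have kfl: "real k = of_int \<lfloor>y/d\<rfloor>" using y0 d by (simp add: k_def)
    have k1: "real k \<le> y/d" "y/d < real k + 1"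
      using kfl by linarith+
    have "k \<le> K"
    proof -
      have "y/d \<le> 1/d" using y0 d by (simp add: divide_right_mono)
      then have "\<lfloor>y/d\<rfloor> \<le> \<lceil>1/d\<rceil>" by linarith
      then show ?thesis unfolding k_def K_def by simp
    qed
    then have a: "\<bar>h (x + real k * d) - h x\<bar> < \<epsilon>" using X1 x by auto
    have kd: "real k * d \<le> y" "y - real k * d \<le> d" "0 \<le> real k * d"
      using k1 d by (auto simp: field_simps)
    have b: "\<bar>h ((x + real k * d) + (y - real k * d)) - h (x + real k * d)\<bar> \<le> 2*\<epsilon>"
      by (rule step) (use x kd in linarith)+
    show "\<bar>h (x+y) - h x\<bar> \<le> 3*\<epsilon>" using a b by simp
  qed
qed

lemma potter_add:
  fixes h :: "real \<Rightarrow> real"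
  assumes cont: "continuous_on UNIV h"
    and lim: "\<And>y. ((\<lambda>x. h (x+y) - h x) \<longlongrightarrow> 0) at_top" and e: "\<eta> > 0"
  shows "\<exists>X. \<forall>x\<ge>X. \<forall>y\<ge>0. \<bar>h (x+y) - h x\<bar> \<le> \<eta>*y + \<eta>"
proof -
  obtain X where X: "\<forall>x\<ge>X. \<forall>y\<in>{0..1}. \<bar>h (x+y) - h x\<bar> \<le> 3*(\<eta>/3)"
    using uct_add[OF cont lim, of "\<eta>/3"] e by auto
  have ind: "\<forall>x\<ge>X. \<forall>y. 0 \<le> y \<and> y \<le> real n + 1 \<longrightarrow> \<bar>h (x+y) - h x\<bar> \<le> \<eta>*(real n+1)" for n
  proof (induction n)
    case 0
    then show ?case using X by auto
  next
    case (Suc n)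
    show ?case
    proof (intro allI impI)
      fix x y assume x: "x \<ge> X" and y: "0 \<le> y \<and> y \<le> real (Suc n) + 1"
      show "\<bar>h (x+y) - h x\<bar> \<le> \<eta>*(real (Suc n)+1)"
      proof (cases "y \<le> real n + 1")
        case True
        then have "\<bar>h (x+y) - h x\<bar> \<le> \<eta>*(real n+1)" using Suc.IH x y by auto
        also have "\<dots> \<le> \<eta>*(real (Suc n)+1)" using e by simp
        finally show ?thesis .
      next
        case False
        have x1: "x+1 \<ge> X" using x by simp
        have y1: "0 \<le> y-1 \<and> y-1 \<le> real n + 1" using y False by auto
        have a: "\<bar>h ((x+1) + (y-1)) - h (x+1)\<bar> \<le> \<eta>*(real n+1)"
          using Suc.IH[rule_format, OF x1, of "y-1"] y1 by blast
        have b: "\<bar>h (x+1) - h x\<bar> \<le> \<eta>" using X x by force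
        have "\<bar>h (x+y) - h x\<bar> \<le> \<bar>h ((x+1) + (y-1)) - h (x+1)\<bar> + \<bar>h (x+1) - h x\<bar>" by simp
        also have "\<dots> \<le> \<eta>*(real (Suc n)+1)" using a b by (simp add: algebra_simps)
        finally show ?thesis .
      qed
    qed
  qed
  show ?thesis
  proof (intro exI[of _ X] allI impI)
    fix x y :: real assume x: "x \<ge> X" and y: "y \<ge> 0"
    define n where "n = nat \<lfloor>y\<rfloor>"
    have n: "real n \<le> y" "y \<le> real n + 1" using y by (auto simp: n_def)
    have "\<bar>h (x+y) - h x\<bar> \<le> \<eta>*(real n+1)" using ind[of n] x y n by auto
    also have "\<dots> \<le> \<eta>*y + \<eta>" using n e by (simp add: algebra_simps)
    finally show "\<bar>h (x+y) - h x\<bar> \<le> \<eta>*y + \<eta>" .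
  qed
qed

lemma potter_mult:
  fixes L :: "real \<Rightarrow> real"
  assumes pos: "\<forall>t>0. L t > 0" and cont: "continuous_on {0<..} L"
    and sv: "slowly_varying_at_top L" and e: "\<eta> > 0"
  shows "\<exists>T>0. \<forall>t\<ge>T. \<forall>x\<ge>1. L (x*t) \<le> exp \<eta> * x powr \<eta> * L t \<and> L t \<le> exp \<eta> * x powr \<eta> * L (x*t)"
proof -
  define h where "h s = ln (L (exp s))" for s
  have hc: "continuous_on UNIV h"
  proof -
    have "continuous_on UNIV (\<lambda>s. L (exp s))"
      by (rule continuous_on_compose2[OF cont]) (auto intro: continuous_intros)
    moreover have "\<forall>s\<in>UNIV. L (exp s) \<noteq> 0" using pos by (metis exp_gt_zero less_irrefl)
    ultimately show ?thesis unfolding h_def by (intro continuous_intros) auto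
  qed
  have hl: "((\<lambda>x. h (x+y) - h x) \<longlongrightarrow> 0) at_top" for y
  proof -
    have l1: "((\<lambda>t. L (exp y * t) / L t) \<longlongrightarrow> 1) at_top"
      using sv unfolding slowly_varying_at_top_def by auto
    have l2: "((\<lambda>x. L (exp y * exp x) / L (exp x)) \<longlongrightarrow> 1) at_top"
      using filterlim_compose[OF l1 exp_at_top] by (simp add: o_def)
    have l3: "((\<lambda>x. ln (L (exp y * exp x) / L (exp x))) \<longlongrightarrow> ln 1) at_top"
      by (intro tendsto_ln l2) simp
    have "h (x+y) - h x = ln (L (exp y * exp x) / L (exp x))" for x
    proof -
      have p: "L (exp x * exp y) > 0" "L (exp y * exp x) > 0" "L (exp x) > 0" using pos by simp_all
      then show ?thesis by (simp add: h_def ln_div exp_add mult.commute)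
    qed
    then show ?thesis using l3 by simp
  qed
  obtain X where X: "\<forall>x\<ge>X. \<forall>y\<ge>0. \<bar>h (x+y) - h x\<bar> \<le> \<eta>*y + \<eta>"
    using potter_add[OF hc hl e] by blast
  show ?thesis
  proof (intro exI[of _ "exp X"] conjI allI impI)
    show "exp X > 0" by simp
    fix t x :: real assume t: "exp X \<le> t" and x: "1 \<le> x"
    have tp: "t > 0" using t by (metis exp_gt_zero less_le_trans)
    have xp: "x > 0" using x by simp
    have lt: "ln t \<ge> X" using t tp by (metis exp_le_cancel_iff exp_ln)
    have "\<bar>h (ln t + ln x) - h (ln t)\<bar> \<le> \<eta> * ln x + \<eta>" using X lt x by auto
    moreover have "h (ln t + ln x) = ln (L (x*t))" "h (ln t) = ln (L t)"
      using tp xp by (simp_all add: h_def exp_add mult.commute)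
    ultimately have ineq: "\<bar>ln (L (x*t)) - ln (L t)\<bar> \<le> \<eta> * ln x + \<eta>" by simp
    have Lxt: "L (x*t) > 0" "L t > 0" using pos tp xp by auto
    have xe: "exp \<eta> * x powr \<eta> * L t = exp (ln (L t) + \<eta> * ln x + \<eta>)"
      using Lxt xp by (simp add: exp_add powr_def mult.commute)
    have xe2: "exp \<eta> * x powr \<eta> * L (x*t) = exp (ln (L (x*t)) + \<eta> * ln x + \<eta>)"
      using Lxt xp by (simp add: exp_add powr_def mult.commute)
    have "L (x*t) = exp (ln (L (x*t)))" using Lxt by simp
    also have "\<dots> \<le> exp (ln (L t) + \<eta> * ln x + \<eta>)" using ineq by simp
    finally show "L (x*t) \<le> exp \<eta> * x powr \<eta> * L t" using xe by simp
    have "L t = exp (ln (L t))" using Lxt by simp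
    also have "\<dots> \<le> exp (ln (L (x*t)) + \<eta> * ln x + \<eta>)" using ineq by simp
    finally show "L t \<le> exp \<eta> * x powr \<eta> * L (x*t)" using xe2 by simp
  qed
qed

lemma integral_cmul_real: "integral S (\<lambda>x. c * f x) = c * integral S (f :: 'a::euclidean_space \<Rightarrow> real)"
  using integral_cmul[where c=c and f=f and S=S] by simp

lemma Ici_Ioi_neg: "negligible ({0::real..} - {0<..} \<union> ({0<..} - {0..}))"
proof -
  have "{0::real..} - {0<..} \<union> ({0<..} - {0..}) = {0}" by auto
  then show ?thesis by simp
qed

lemma integrable_Ici_Ioi: "(f::real\<Rightarrow>real) integrable_on {0::real..} \<longleftrightarrow> f integrable_on {0<..}"
  using integrable_spike_set_eq[OF Ici_Ioi_neg] by blast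

lemma integral_Ici_Ioi: "integral {0::real..} (f::real\<Rightarrow>real) = integral {0<..} f"
  by (rule integral_spike_set; rule negligible_subset[of "{0}"]) auto

lemma scale_integral_both:
  fixes f :: "real \<Rightarrow> real" and t :: real
  assumes t: "t > 0" and f: "f absolutely_integrable_on {0<..}"
  shows "(\<lambda>u. t * f (t*u)) absolutely_integrable_on {0<..} \<and> integral {0<..} (\<lambda>u. t * f (t*u)) = integral {0<..} f"
proof -
  have der: "((\<lambda>u. t*u) has_field_derivative t) (at x within {0<..})" for x
    by (auto intro!: derivative_eq_intros)
  have inj: "inj_on (\<lambda>u. t*u) {0<..}" using t by (auto simp: inj_on_def)
  have img: "(\<lambda>u. t*u) ` {0<..} = {0<..}"
  proof
    show "(\<lambda>u. t*u) ` {0<..} \<subseteq> {0<..}" using t by auto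
    show "{0<..} \<subseteq> (\<lambda>u. t*u) ` {0<..}"
    proof
      fix s :: real assume "s \<in> {0<..}"
      then have "s/t \<in> {0<..}" "s = t*(s/t)" using t by auto
      then show "s \<in> (\<lambda>u. t*u) ` {0<..}" by blast
    qed
  qed
  have "(\<lambda>x. \<bar>t\<bar> * f (t*x)) absolutely_integrable_on {0<..} \<and>
           integral {0<..} (\<lambda>x. \<bar>t\<bar> * f (t*x)) = integral {0<..} f"
    using has_absolute_integral_change_of_variables_1'[of "{0<..}" "\<lambda>u. t*u" "\<lambda>_. t" f
        "integral {0<..} f", OF _ der inj] img f by simp
  then show ?thesis using t by simp
qed

lemma scale_integral:
  fixes f :: "real \<Rightarrow> real" and t :: real
  assumes t: "t > 0" and f: "f absolutely_integrable_on {0<..}"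
  shows "integral {0<..} (\<lambda>u. t * f (t*u)) = integral {0<..} f"
  using scale_integral_both[OF assms] by blast

lemma scale_integral_abs:
  fixes f :: "real \<Rightarrow> real" and t :: real
  assumes t: "t > 0" and f: "f absolutely_integrable_on {0<..}"
  shows "(\<lambda>u. t * f (t*u)) absolutely_integrable_on {0<..}"
  using scale_integral_both[OF assms] by blast

theorem theorem7p1:
  fixes r :: "real \<Rightarrow> real" and \<mu> :: real
  assumes cont: "continuous_on {0..} r"
    and pos: "\<forall>t\<ge>0. r t > 0"
    and rv: "regularly_varying_at_top \<mu> r"
    and mu: "-1 < \<mu>" "\<mu> < -1/2"
  shows "(\<forall>t\<ge>0. (\<lambda>s. r s * r (s + t)) integrable_on {0..})
    \<and> ((\<lambda>t. integral {0..} (\<lambda>s. r s * r (s + t)) / (t * (r t)\<^sup>2))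
         \<longlongrightarrow> Gamma (-1 - 2*\<mu>) * Gamma (1 + \<mu>) / Gamma (-\<mu>)) at_top
    \<and> Gamma (-1 - 2*\<mu>) * Gamma (1 + \<mu>) / Gamma (-\<mu>) > 0"
proof -
  obtain L where Lpos: "\<forall>t>0. L t > 0" and sv: "slowly_varying_at_top L"
    and rL: "\<forall>t>0. r t = t powr \<mu> * L t"
    using rv unfolding regularly_varying_at_top_def by blast
  have Lcont: "continuous_on {0<..} L"
  proof -
    have c1: "continuous_on {0<..} r" by (rule continuous_on_subset[OF cont]) auto
    have c2: "continuous_on {0<..} (\<lambda>t::real. t powr \<mu>)"
      by (rule continuous_on_powr'[OF continuous_on_id continuous_on_const]) auto
    have "continuous_on {0<..} (\<lambda>t. r t / t powr \<mu>)"
      by (rule continuous_on_divide[OF c1 c2]) auto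
    moreover have "\<And>t. t \<in> {0<..} \<Longrightarrow> r t / t powr \<mu> = L t" using rL by auto
    ultimately show ?thesis by (rule continuous_on_eq)
  qed
  define \<delta> where "\<delta> = min ((-1/2-\<mu>)/2) ((1+\<mu>)/2)"
  have d1: "\<delta> \<le> (-1/2-\<mu>)/2" "\<delta> \<le> (1+\<mu>)/2" "\<delta> = (-1/2-\<mu>)/2 \<or> \<delta> = (1+\<mu>)/2"
    unfolding \<delta>_def by (rule min.cobounded1, rule min.cobounded2, simp add: min_def)
  have \<delta>0: "\<delta> > 0" using mu d1(3) by auto
  have \<delta>: "\<delta> > 0" "\<mu>+\<delta> < -1/2" "\<mu> - \<delta> > -1"
    using \<delta>0 apply simp using mu d1(1) apply argo using mu d1(2) by argo
  obtain T0 where T0: "T0 > 0" "\<forall>t\<ge>T0. \<forall>x\<ge>1. L (x*t) \<le> exp \<delta> * x powr \<delta> * L t \<and> L t \<le> exp \<delta> * x powr \<delta> * L (x*t)"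
    using potter_mult[OF Lpos Lcont sv \<delta>(1)] by blast
  define T where "T = max T0 1"
  define E where "E = exp \<delta>"
  have T: "T \<ge> 1" "T \<ge> T0" "T > 0" by (auto simp: T_def)
  have E: "E > 0" by (simp add: E_def)
  have P12: "L (x*t) \<le> E * x powr \<delta> * L t \<and> L t \<le> E * x powr \<delta> * L (x*t)"
    if "t \<ge> T" "x \<ge> 1" for t x
  proof -
    have "t \<ge> T0" using that(1) T(2) by linarith
    then show ?thesis using T0(2) that(2) unfolding E_def by blast
  qed
  have P1: "L (x*t) \<le> E * x powr \<delta> * L t" if "t \<ge> T" "x \<ge> 1" for t x
    using P12[OF that] by (rule conjunct1)
  have P2: "L t \<le> E * x powr \<delta> * L (x*t)" if "t \<ge> T" "x \<ge> 1" for t x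
    using P12[OF that] by (rule conjunct2)
  have rpos: "r s > 0" if "s \<ge> 0" for s using pos that by auto
  have cT: "continuous_on {0..T} r" by (rule continuous_on_subset[OF cont]) auto
  have "\<exists>x\<in>{0..T}. \<forall>y\<in>{0..T}. r y \<le> r x"
    by (rule continuous_attains_sup[OF compact_Icc _ cT]) (use T in auto)
  then obtain s0 where s0: "s0 \<in> {0..T}" "\<forall>y\<in>{0..T}. r y \<le> r s0" by blast
  define M where "M = r s0"
  have M: "M > 0" using s0 rpos by (auto simp: M_def)
  have Mb: "r s \<le> M" if "0 \<le> s" "s \<le> T" for s using s0 that by (auto simp: M_def)
  define C1 where "C1 = E * L T * T powr (-\<delta>)"
  have C1: "C1 > 0" using E Lpos T by (auto simp: C1_def)
  have B1: "r s \<le> C1 * s powr (\<mu>+\<delta>)" if "s \<ge> T" for s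
  proof -
    have s: "s > 0" using that T by auto
    have "L s = L ((s/T)*T)" using T by simp
    also have "\<dots> \<le> E * (s/T) powr \<delta> * L T" by (rule P1) (use that T in auto)
    finally have "L s \<le> E * (s/T) powr \<delta> * L T" .
    then have "r s \<le> s powr \<mu> * (E * (s/T) powr \<delta> * L T)"
      using rL s by (simp add: mult_left_mono)
    also have "\<dots> = C1 * s powr (\<mu>+\<delta>)"
    proof -
      have "(s/T) powr \<delta> = s powr \<delta> * T powr (-\<delta>)"
        using s T by (subst powr_divide) (auto simp: powr_minus divide_inverse)
      moreover have "s powr (\<mu>+\<delta>) = s powr \<mu> * s powr \<delta>" by (simp add: powr_add)
      ultimately show ?thesis by (simp add: C1_def mult_ac)
    qed
    finally show ?thesis .
  qed
  define B where "B = max M (C1 * T powr (\<mu>+\<delta>))"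
  have Bb: "r s \<le> B" if "s \<ge> 0" for s
  proof (cases "s \<le> T")
    case True then have "r s \<le> M" using Mb that by blast
    then show ?thesis by (simp add: B_def le_max_iff_disj)
  next
    case False
    then have "r s \<le> C1 * s powr (\<mu>+\<delta>)" using B1 by auto
    also have "\<dots> \<le> C1 * T powr (\<mu>+\<delta>)"
      using False T C1 \<delta> by (intro mult_left_mono powr_mono2') auto
    finally show ?thesis by (simp add: B_def le_max_iff_disj)
  qed
  have B0: "B > 0" using M by (auto simp: B_def)
  define c0 where "c0 = L T * T powr \<delta> / E"
  have c0: "c0 > 0" using Lpos T E by (auto simp: c0_def)
  have B2: "r t \<ge> c0 * t powr (\<mu> - \<delta>)" if "t \<ge> T" for t
  proof -
    have t: "t > 0" using that T by auto
    have "L T \<le> E * (t/T) powr \<delta> * L ((t/T)*T)" by (rule P2) (use that T in auto)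
    then have "L T \<le> E * (t/T) powr \<delta> * L t" using T by simp
    then have ineq: "L T \<le> E * (t powr \<delta> / T powr \<delta>) * L t" using t T by (simp add: powr_divide)
    have tp: "t powr \<delta> > 0" "T powr \<delta> > 0" using t T by auto
    have "L T * T powr \<delta> \<le> E * (t powr \<delta> / T powr \<delta>) * L t * T powr \<delta>"
      using mult_right_mono[OF ineq, of "T powr \<delta>"] tp by simp
    also have "\<dots> = E * t powr \<delta> * L t" using tp by simp
    finally have ineq2: "L T * T powr \<delta> \<le> E * t powr \<delta> * L t" .
    have "c0 * t powr (-\<delta>) = L T * T powr \<delta> / (E * t powr \<delta>)"
      by (simp add: c0_def powr_minus divide_inverse mult_ac)
    also have "\<dots> \<le> L t" using ineq2 tp E by (simp add: pos_divide_le_eq mult_ac)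
    finally have "c0 * t powr (-\<delta>) \<le> L t" .
    then have "t powr \<mu> * (c0 * t powr (-\<delta>)) \<le> t powr \<mu> * L t" by (simp add: mult_left_mono)
    moreover have "t powr \<mu> * (c0 * t powr (-\<delta>)) = c0 * t powr (\<mu> - \<delta>)"
      by (simp add: powr_add[symmetric] mult_ac)
    ultimately show ?thesis using rL t by simp
  qed
  define p where "p = 2*\<mu> + 2*\<delta>"
  have p: "p < -1" "p \<le> 0" using \<delta> unfolding p_def by argo+
  have gint: "(\<lambda>s. (1+s) powr p) absolutely_integrable_on {0<..}"
  proof -
    have "(\<lambda>u. u powr 0 * (1+u) powr p) absolutely_integrable_on {0<..}"
      using beta_halfline[of 0 p] p by auto
    then show ?thesis by (rule absolutely_integrable_spike[OF _ negligible_empty]) auto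
  qed
  define K where "K = max (B^2 * (1+T) powr (-p)) (C1^2 * 2 powr (-p))"
  have fbound: "r s * r (s+t) \<le> K * (1+s) powr p" if t: "t \<ge> 0" and s: "s > 0" for s t
  proof (cases "s \<le> T")
    case True
    have "r s * r (s+t) \<le> B * B"
      using Bb[of s] Bb[of "s+t"] rpos[of "s+t"] t s B0 by (intro mult_mono) auto
    also have "B * B = B^2 * ((1+T) powr (-p) * (1+T) powr p)"
      using T by (simp add: powr_add[symmetric] power2_eq_square)
    also have "\<dots> \<le> B^2 * ((1+T) powr (-p) * (1+s) powr p)"
      using True s p by (intro mult_left_mono powr_mono2') auto
    also have "\<dots> = (B^2 * (1+T) powr (-p)) * (1+s) powr p" by (simp add: mult_ac)
    also have "\<dots> \<le> K * (1+s) powr p"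
      by (intro mult_right_mono) (auto simp: K_def)
    finally show ?thesis .
  next
    case False
    have s1: "s \<ge> 1" "s > 0" using False T by auto
    have r1: "r s \<le> C1 * s powr (\<mu>+\<delta>)" using B1 False by auto
    have "r (s+t) \<le> C1 * (s+t) powr (\<mu>+\<delta>)" using B1 False t by auto
    also have "\<dots> \<le> C1 * s powr (\<mu>+\<delta>)"
      using C1 s1 t \<delta> by (intro mult_left_mono powr_mono2') auto
    finally have r2: "r (s+t) \<le> C1 * s powr (\<mu>+\<delta>)" .
    have "r s * r (s+t) \<le> (C1 * s powr (\<mu>+\<delta>)) * (C1 * s powr (\<mu>+\<delta>))"
      using r1 r2 rpos[of s] rpos[of "s+t"] s1 t by (intro mult_mono) auto
    also have "\<dots> = C1^2 * s powr p"
      by (simp add: p_def power2_eq_square powr_add[symmetric] mult_ac)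
    also have "\<dots> \<le> C1^2 * ((1+s)/2) powr p"
      using s1 p by (intro mult_left_mono powr_mono2') auto
    also have "((1+s)/2) powr p = (1+s) powr p * 2 powr (-p)"
      using s1 by (subst powr_divide) (auto simp: powr_minus divide_inverse)
    also have "C1^2 * ((1+s) powr p * 2 powr (-p)) = (C1^2 * 2 powr (-p)) * (1+s) powr p"
      by (simp add: mult_ac)
    also have "\<dots> \<le> K * (1+s) powr p"
      by (intro mult_right_mono) (auto simp: K_def)
    finally show ?thesis .
  qed
  have Ioi_leb: "{0::real<..} \<in> sets lebesgue" by simp
  have gKint: "(\<lambda>s. K * (1+s) powr p) integrable_on {0<..}"
    by (rule integrable_on_mult_right) (use gint in \<open>simp add: absolutely_integrable_on_def\<close>)
  have int0: "(\<lambda>s. r s * r (s + t)) absolutely_integrable_on {0<..}" if t: "t \<ge> 0" for t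
  proof -
    have c1: "continuous_on {0<..} r" by (rule continuous_on_subset[OF cont]) auto
    have c2: "continuous_on {0<..} (\<lambda>s. r (s+t))"
      by (rule continuous_on_compose2[OF cont]) (use t in \<open>auto intro!: continuous_intros\<close>)
    have cf: "continuous_on {0<..} (\<lambda>s. r s * r (s+t))" by (rule continuous_on_mult[OF c1 c2])
    show "(\<lambda>s. r s * r (s+t)) absolutely_integrable_on {0<..}"
    proof (rule measurable_bounded_by_integrable_imp_absolutely_integrable[OF
          continuous_imp_measurable_on_sets_lebesgue[OF cf Ioi_leb] Ioi_leb gKint])
      fix s :: real assume "s \<in> {0<..}"
      then have s: "s > 0" by simp
      have "norm (r s * r (s+t)) = r s * r (s+t)" using rpos[of s] rpos[of "s+t"] s t by simp
      then show "norm (r s * r (s+t)) \<le> K * (1+s) powr p" using fbound[OF t s] by simp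
    qed
  qed
  have int1: "\<forall>t\<ge>0. (\<lambda>s. r s * r (s + t)) integrable_on {0..}"
    using int0 integrable_Ici_Ioi unfolding absolutely_integrable_on_def by blast
  have ex1: "\<mu>+\<delta> > -1" using \<delta> by argo
  have ex2: "(\<mu>+\<delta>) + (\<mu>+\<delta>) < -1" using \<delta> by argo
  have ex3: "(\<mu>-\<delta>) + (\<mu>+\<delta>) < -1" using mu by argo
  have ex4: "\<mu> + \<mu> < -1" using mu by argo
  define F where "F t u = r (t*u) * r (t*u+t) / (r t)^2" for t u
  define K1 where "K1 = max E (M / c0 * T powr (\<delta> - \<mu>))"
  have K1: "K1 \<ge> E" "K1 \<ge> M / c0 * T powr (\<delta> - \<mu>)" by (auto simp: K1_def)
  define H where "H u = E * K1 * (u powr (\<mu>+\<delta>) * (1+u) powr (\<mu>+\<delta>) + u powr (\<mu>-\<delta>) * (1+u) powr (\<mu>+\<delta>))" for u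
  have Hint: "H integrable_on {0<..}"
  proof -
    have h1: "(\<lambda>u. u powr (\<mu>+\<delta>) * (1+u) powr (\<mu>+\<delta>)) integrable_on {0<..}"
      using beta_halfline[of "\<mu>+\<delta>" "\<mu>+\<delta>"] ex1 ex2 unfolding absolutely_integrable_on_def by blast
    have h2: "(\<lambda>u. u powr (\<mu>-\<delta>) * (1+u) powr (\<mu>+\<delta>)) integrable_on {0<..}"
      using beta_halfline[of "\<mu>-\<delta>" "\<mu>+\<delta>"] \<delta> ex3 unfolding absolutely_integrable_on_def by blast
    show ?thesis unfolding H_def[abs_def]
      by (intro integrable_on_mult_right integrable_add h1 h2)
  qed
  have Q2: "r (t*u+t) / r t \<le> E * (1+u) powr (\<mu>+\<delta>)" if t: "t \<ge> T" and u: "u > 0" for t u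
  proof -
    have tp: "t > 0" using t T by auto
    have e: "t*u+t = (1+u)*t" by (simp add: algebra_simps)
    have "r (t*u+t) = ((1+u)*t) powr \<mu> * L ((1+u)*t)"
      unfolding e by (rule rL[rule_format]) (use tp u in simp)
    also have "\<dots> \<le> ((1+u)*t) powr \<mu> * (E * (1+u) powr \<delta> * L t)"
      using P1[OF t, of "1+u"] u by (intro mult_left_mono) auto
    also have "\<dots> = E * (1+u) powr (\<mu>+\<delta>) * (t powr \<mu> * L t)"
      using tp u by (simp add: powr_mult powr_add mult_ac)
    also have "\<dots> = E * (1+u) powr (\<mu>+\<delta>) * r t" using rL tp by simp
    finally show ?thesis using rpos[of t] tp by (simp add: pos_divide_le_eq)
  qed
  have Q1: "r (t*u) / r t \<le> K1 * (u powr (\<mu>+\<delta>) + u powr (\<mu>-\<delta>))" if t: "t \<ge> T" and u: "u > 0" for t u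
  proof -
    have tp: "t > 0" using t T by auto
    have rt: "r t > 0" using rpos tp by auto
    have nn: "u powr (\<mu>+\<delta>) \<ge> 0" "u powr (\<mu>-\<delta>) \<ge> 0" by auto
    consider "u \<ge> 1" | "u < 1" "t*u \<ge> T" | "t*u < T" by linarith
    then show ?thesis
    proof cases
      case 1
      have e: "r (t*u) = r (u*t)" by (simp add: mult.commute)
      have "r (t*u) = (u*t) powr \<mu> * L (u*t)" unfolding e by (rule rL[rule_format]) (use tp u in simp)
      also have "\<dots> \<le> (u*t) powr \<mu> * (E * u powr \<delta> * L t)"
        using P1[OF t 1] by (intro mult_left_mono) auto
      also have "\<dots> = E * u powr (\<mu>+\<delta>) * (t powr \<mu> * L t)"
        using tp u by (simp add: powr_mult powr_add mult_ac)
      also have "\<dots> = E * u powr (\<mu>+\<delta>) * r t" using rL tp by simp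
      finally have "r (t*u) / r t \<le> E * u powr (\<mu>+\<delta>)" using rt by (simp add: pos_divide_le_eq)
      also have "\<dots> \<le> K1 * (u powr (\<mu>+\<delta>) + u powr (\<mu>-\<delta>))"
        using K1 E nn by (intro mult_mono) auto
      finally show ?thesis .
    next
      case 2
      have "L (t*u) \<le> E * (1/u) powr \<delta> * L ((1/u)*(t*u))"
        using P2[OF 2(2), of "1/u"] 2 u by auto
      also have "(1/u)*(t*u) = t" using u by simp
      also have "(1/u) powr \<delta> = u powr (-\<delta>)" using u by (subst powr_divide) (auto simp: powr_minus_divide)
      finally have Lb: "L (t*u) \<le> E * u powr (-\<delta>) * L t" .
      have "r (t*u) = (t*u) powr \<mu> * L (t*u)" by (rule rL[rule_format]) (use tp u in simp)
      also have "\<dots> \<le> (t*u) powr \<mu> * (E * u powr (-\<delta>) * L t)"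
        using Lb by (intro mult_left_mono) auto
      also have "\<dots> = E * u powr (\<mu>-\<delta>) * (t powr \<mu> * L t)"
        using tp u by (simp add: powr_mult powr_diff powr_minus divide_inverse mult_ac)
      also have "\<dots> = E * u powr (\<mu>-\<delta>) * r t" using rL tp by simp
      finally have "r (t*u) / r t \<le> E * u powr (\<mu>-\<delta>)" using rt by (simp add: pos_divide_le_eq)
      also have "\<dots> \<le> K1 * (u powr (\<mu>+\<delta>) + u powr (\<mu>-\<delta>))"
        using K1 E nn by (intro mult_mono) auto
      finally show ?thesis .
    next
      case 3
      have rtu: "r (t*u) \<le> M" using Mb[of "t*u"] 3 tp u by auto
      have rtl: "r t \<ge> c0 * t powr (\<mu> - \<delta>)" using B2[OF t] .
      have cp: "c0 * t powr (\<mu> - \<delta>) > 0" using c0 tp by auto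
      have "r (t*u) / r t \<le> M / (c0 * t powr (\<mu> - \<delta>))"
        using rtu rtl cp M rt by (intro frac_le) auto
      also have "\<dots> = M / c0 * t powr (\<delta> - \<mu>)"
      proof -
        have "t powr (\<delta> - \<mu>) = inverse (t powr (\<mu> - \<delta>))" using powr_minus[of t "\<mu> - \<delta>"] by simp
        then show ?thesis by (simp add: divide_inverse mult_ac)
      qed
      also have "\<dots> \<le> M / c0 * (T/u) powr (\<delta> - \<mu>)"
      proof -
        have "t \<le> T/u" using 3 u by (simp add: field_simps)
        then show ?thesis using M c0 \<delta> mu tp by (intro mult_left_mono powr_mono2) auto
      qed
      also have "(T/u) powr (\<delta> - \<mu>) = T powr (\<delta> - \<mu>) * u powr (\<mu> - \<delta>)"
      proof -
        have "u powr (\<mu> - \<delta>) = inverse (u powr (\<delta> - \<mu>))" using powr_minus[of u "\<delta> - \<mu>"] by simp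
        then show ?thesis using T u by (subst powr_divide) (auto simp: divide_inverse)
      qed
      also have "M / c0 * (T powr (\<delta> - \<mu>) * u powr (\<mu> - \<delta>)) = (M / c0 * T powr (\<delta> - \<mu>)) * u powr (\<mu> - \<delta>)"
        by (simp add: mult_ac)
      also have "\<dots> \<le> K1 * (u powr (\<mu>+\<delta>) + u powr (\<mu>-\<delta>))"
        using K1 M c0 nn E by (intro mult_mono) auto
      finally show ?thesis .
    qed
  qed
  have Fnn: "F t u \<ge> 0" if "t \<ge> T" "u > 0" for t u
  proof -
    have "r (t*u) > 0" "r (t*u+t) > 0" using rpos that T by simp_all
    then show ?thesis unfolding F_def by simp
  qed
  have Fsplit: "F t u = (r (t*u) / r t) * (r (t*u+t) / r t)" for t u
    by (simp add: F_def power2_eq_square)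
  have Fbound: "norm (F t u) \<le> H u" if t: "t \<ge> T" and u: "u > 0" for t u
  proof -
    have "norm (F t u) = F t u" using Fnn[OF t u] by simp
    also have "\<dots> = (r (t*u) / r t) * (r (t*u+t) / r t)" by (rule Fsplit)
    also have "\<dots> \<le> (K1 * (u powr (\<mu>+\<delta>) + u powr (\<mu>-\<delta>))) * (E * (1+u) powr (\<mu>+\<delta>))"
    proof (rule mult_mono[OF Q1[OF t u] Q2[OF t u]])
      have "K1 > 0" using K1 E by linarith
      then show "0 \<le> K1 * (u powr (\<mu>+\<delta>) + u powr (\<mu>-\<delta>))" by simp
      have "r (t*u+t) > 0" "r t > 0" using rpos t T u by simp_all
      then show "0 \<le> r (t*u+t) / r t" by simp
    qed
    also have "\<dots> = H u" by (simp add: H_def algebra_simps)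
    finally show ?thesis .
  qed
  have Fint: "F t integrable_on {0<..}" if t: "t \<ge> T" for t
  proof -
    have tp: "t > 0" using t T by auto
    have "(\<lambda>s. r s * r (s + t)) absolutely_integrable_on {0<..}" using int0 tp by auto
    then have "(\<lambda>u. t * (r (t*u) * r (t*u + t))) absolutely_integrable_on {0<..}"
      using scale_integral_abs[OF tp] by blast
    then have "(\<lambda>u. (1 / (t * (r t)^2)) * (t * (r (t*u) * r (t*u + t)))) integrable_on {0<..}"
      unfolding absolutely_integrable_on_def
      using integrable_on_mult_right[where f="\<lambda>u. t * (r (t*u) * r (t*u + t))" and c="1 / (t * (r t)^2)"]
      by blast
    moreover have "(\<lambda>u. (1 / (t * (r t)^2)) * (t * (r (t*u) * r (t*u + t)))) = F t"
      using tp by (auto simp: F_def fun_eq_iff)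
    ultimately show ?thesis by simp
  qed
  have Phi: "integral {0..} (\<lambda>s. r s * r (s + t)) / (t * (r t)\<^sup>2) = integral {0<..} (F t)"
    if t: "t \<ge> T" for t
  proof -
    have tp: "t > 0" using t T by auto
    have "integral {0..} (\<lambda>s. r s * r (s + t)) = integral {0<..} (\<lambda>s. r s * r (s + t))"
      by (rule integral_Ici_Ioi)
    also have "\<dots> = integral {0<..} (\<lambda>u. t * (r (t*u) * r (t*u + t)))"
      using scale_integral[OF tp int0[of t]] tp by simp
    finally have "integral {0..} (\<lambda>s. r s * r (s + t)) / (t * (r t)\<^sup>2)
       = (1 / (t * (r t)^2)) * integral {0<..} (\<lambda>u. t * (r (t*u) * r (t*u + t)))" by simp
    also have "\<dots> = integral {0<..} (\<lambda>u. (1 / (t * (r t)^2)) * (t * (r (t*u) * r (t*u + t))))"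
      by (rule integral_cmul_real[symmetric])
    also have "(\<lambda>u. (1 / (t * (r t)^2)) * (t * (r (t*u) * r (t*u + t)))) = F t"
      using tp by (auto simp: F_def fun_eq_iff)
    finally show ?thesis .
  qed
  have Flim: "((\<lambda>t. F t u) \<longlongrightarrow> u powr \<mu> * (1+u) powr \<mu>) at_top" if u: "u > 0" for u
  proof -
    have l1: "((\<lambda>t. L (u*t) / L t) \<longlongrightarrow> 1) at_top" "((\<lambda>t. L ((1+u)*t) / L t) \<longlongrightarrow> 1) at_top"
      using sv u unfolding slowly_varying_at_top_def by auto
    have l2: "((\<lambda>t. (u powr \<mu> * (L (u*t) / L t)) * ((1+u) powr \<mu> * (L ((1+u)*t) / L t)))
        \<longlongrightarrow> (u powr \<mu> * 1) * ((1+u) powr \<mu> * 1)) at_top"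
      by (intro tendsto_mult tendsto_const l1)
    have "eventually (\<lambda>t. (u powr \<mu> * (L (u*t) / L t)) * ((1+u) powr \<mu> * (L ((1+u)*t) / L t)) = F t u) at_top"
      using eventually_gt_at_top[of 0]
    proof eventually_elim
      case (elim t)
      have Lt: "L t > 0" using Lpos elim by auto
      have e: "r (t*u) = r (u*t)" by (simp add: mult.commute)
      have r1: "r (u*t) = (u*t) powr \<mu> * L (u*t)" by (rule rL[rule_format]) (use elim u in simp)
      have r2: "r t = t powr \<mu> * L t" by (rule rL[rule_format]) (use elim in simp)
      have a: "r (t*u) / r t = u powr \<mu> * (L (u*t) / L t)"
        unfolding e r1 r2 using elim u Lt by (simp add: powr_mult)
      have b: "r (t*u+t) / r t = (1+u) powr \<mu> * (L ((1+u)*t) / L t)"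
      proof -
        have e: "t*u+t = (1+u)*t" by (simp add: algebra_simps)
        have r1: "r ((1+u)*t) = ((1+u)*t) powr \<mu> * L ((1+u)*t)" by (rule rL[rule_format]) (use elim u in simp)
        have r2: "r t = t powr \<mu> * L t" by (rule rL[rule_format]) (use elim in simp)
        show ?thesis unfolding e r1 r2 using elim u Lt by (simp add: powr_mult)
      qed
      show ?case unfolding Fsplit[of t u] a b by (rule refl)
    qed
    from Lim_transform_eventually[OF l2 this] show ?thesis by simp
  qed
  have lim: "((\<lambda>t. integral {0<..} (F t)) \<longlongrightarrow> Beta (\<mu>+1) (-\<mu>-\<mu>-1)) at_top"
  proof (rule tendsto_at_topI_sequentially)
    fix X :: "nat \<Rightarrow> real" assume X: "filterlim X at_top sequentially"
    define Y where "Y n = max T (X n)" for n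
    have YT: "Y n \<ge> T" for n by (simp add: Y_def)
    have evT: "eventually (\<lambda>n. T \<le> X n) sequentially"
      using X[unfolded filterlim_at_top, rule_format, of T] .
    have evXY: "eventually (\<lambda>n. integral {0<..} (F (Y n)) = integral {0<..} (F (X n))) sequentially"
      using evT by (rule eventually_mono) (simp only: Y_def max_absorb2)
    have Ylim: "filterlim Y at_top sequentially"
      by (rule filterlim_at_top_mono[OF X]) (simp add: Y_def)
    have conv: "(\<lambda>n. F (Y n) u) \<longlonglongrightarrow> u powr \<mu> * (1+u) powr \<mu>" if "u \<in> {0<..}" for u
    proof -
      have u: "u > 0" using that by simp
      show ?thesis using filterlim_compose[OF Flim[OF u] Ylim] .
    qed
    have "(\<lambda>n. integral {0<..} (F (Y n))) \<longlonglongrightarrow> integral {0<..} (\<lambda>u. u powr \<mu> * (1+u) powr \<mu>)"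
    proof (rule dominated_convergence(2)[where f="\<lambda>n. F (Y n)" and h=H])
      show "\<And>k. F (Y k) integrable_on {0<..}" by (rule Fint[OF YT])
      show "H integrable_on {0<..}" by (rule Hint)
      show "\<And>k x. x \<in> {0<..} \<Longrightarrow> norm (F (Y k) x) \<le> H x"
        by (rule Fbound[OF YT]) simp
      show "\<And>x. x \<in> {0<..} \<Longrightarrow> (\<lambda>k. F (Y k) x) \<longlonglongrightarrow> x powr \<mu> * (1+x) powr \<mu>" by (rule conv)
    qed
    also have "integral {0<..} (\<lambda>u. u powr \<mu> * (1+u) powr \<mu>) = Beta (\<mu>+1) (-\<mu>-\<mu>-1)"
      using beta_halfline[OF mu(1) ex4] by (rule conjunct2)
    finally have dc: "(\<lambda>n. integral {0<..} (F (Y n))) \<longlonglongrightarrow> Beta (\<mu>+1) (-\<mu>-\<mu>-1)" .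
    show "(\<lambda>n. integral {0<..} (F (X n))) \<longlonglongrightarrow> Beta (\<mu>+1) (-\<mu>-\<mu>-1)"
      by (rule Lim_transform_eventually[OF dc evXY])
  qed
  have lim2: "((\<lambda>t. integral {0..} (\<lambda>s. r s * r (s + t)) / (t * (r t)\<^sup>2)) \<longlongrightarrow> Beta (\<mu>+1) (-\<mu>-\<mu>-1)) at_top"
  proof (rule Lim_transform_eventually[OF lim])
    have "eventually (\<lambda>t. t \<ge> T) at_top" by (rule eventually_ge_at_top)
    then show "eventually (\<lambda>t. integral {0<..} (F t) = integral {0..} (\<lambda>s. r s * r (s + t)) / (t * (r t)\<^sup>2)) at_top"
      by (rule eventually_mono) (rule Phi[symmetric])
  qed
  have g1: "Gamma ((\<mu>+1) + (-\<mu>-\<mu>-1)) = Gamma (-\<mu>)" by (rule arg_cong[where f=Gamma]) simp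
  have g2: "Gamma (-\<mu>-\<mu>-1) = Gamma (-1-2*\<mu>)" by (rule arg_cong[where f=Gamma]) simp
  have g3: "Gamma (\<mu>+1) = Gamma (1+\<mu>)" by (rule arg_cong[where f=Gamma]) simp
  have beq: "Beta (\<mu>+1) (-\<mu>-\<mu>-1) = Gamma (-1 - 2*\<mu>) * Gamma (1 + \<mu>) / Gamma (-\<mu>)"
    unfolding Beta_def g1 g2 g3 by (simp add: mult.commute)
  have gpos: "Gamma (-1 - 2*\<mu>) * Gamma (1 + \<mu>) / Gamma (-\<mu>) > 0"
  proof -
    have "-1 - 2*\<mu> > 0" using mu by argo
    moreover have "1 + \<mu> > 0" using mu by argo
    moreover have "-\<mu> > 0" using mu by argo
    ultimately show ?thesis by (intro divide_pos_pos mult_pos_pos Gamma_real_pos)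
  qed
  show ?thesis using int1 lim2 beq gpos by simp
qed

end
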